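(* Fix any sufficiently small $\varepsilon > 0$ and integers $m = m(n)\ge \varepsilon n$, $\ell = \ell(n)\in [\varepsilon m, m]$ and $k = k(n)$ with $k+m\le n$. Let $G = (U,V,F)$ be a bipartite graph with parts $U,V\subseteq V_n$ and edge set $F$, where $|U| = k$, $|V| = m$, and every $u\in U$ has $\deg_G(u)\ge \ell$. Let $T$ be a uniformly random spanning tree of $K_n$. Then there is a constant $c = c(\varepsilon) > 0$ such that $$\Pr(F\cap E(T) = \emptyset)\le \exp(-ck).$$
   Context: $K_n$ is the complete graph on vertex set $V_n=\{v_1,\dots,v_n\}$. *)

theory Defs
  imports "HOL-Probability.Probability"
begin

text \<open>Vertex set V_n = {v_1,...,v_n} is represented by {1..n}; edges are 2-element sets.\<close>

definition Kn_edges :: "nat \<Rightarrow> nat set set" where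
  "Kn_edges n = {{u, v} | u v. u \<in> {1..n} \<and> v \<in> {1..n} \<and> u \<noteq> v}"

definition adj :: "nat set set \<Rightarrow> nat \<Rightarrow> nat \<Rightarrow> bool" where
  "adj T u v \<longleftrightarrow> {u, v} \<in> T"

definition connected_on :: "nat set \<Rightarrow> nat set set \<Rightarrow> bool" where
  "connected_on W T \<longleftrightarrow> (\<forall>u\<in>W. \<forall>v\<in>W. (adj T)\<^sup>*\<^sup>* u v)"

definition acyclic_graph :: "nat set set \<Rightarrow> bool" where
  "acyclic_graph T \<longleftrightarrow> \<not> (\<exists>cs. length cs \<ge> 3 \<and> distinct cs \<and>
      (\<forall>i < length cs. {cs ! i, cs ! ((i + 1) mod length cs)} \<in> T))"

definition spanning_tree :: "nat \<Rightarrow> nat set set \<Rightarrow> bool" where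
  "spanning_tree n T \<longleftrightarrow> T \<subseteq> Kn_edges n \<and> connected_on {1..n} T \<and> acyclic_graph T"

definition spanning_trees :: "nat \<Rightarrow> nat set set set" where
  "spanning_trees n = {T. spanning_tree n T}"

definition UST :: "nat \<Rightarrow> nat set set pmf" where
  "UST n = pmf_of_set (spanning_trees n)"

definition bip_deg :: "nat set set \<Rightarrow> nat set \<Rightarrow> nat \<Rightarrow> nat" where
  "bip_deg F V u = card {v \<in> V. {u, v} \<in> F}"

end

theory Submission
  imports Defs
begin

lemma adj_sym: "adj T u v = adj T v u"
  by (simp add: adj_def insert_commute)

lemma rtc_sym: "(adj T)\<^sup>*\<^sup>* a b \<Longrightarrow> (adj T)\<^sup>*\<^sup>* b a"
proof (induction rule: rtranclp_induct)
  case base then show ?case by simp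
next
  case (step y z)
  then have "adj T z y" by (simp add: adj_sym)
  then show ?case using step.IH by (meson converse_rtranclp_into_rtranclp)
qed

lemma rtc_mono: "(adj H)\<^sup>*\<^sup>* a b \<Longrightarrow> H \<subseteq> T \<Longrightarrow> (adj T)\<^sup>*\<^sup>* a b"
proof (induction rule: rtranclp_induct)
  case (step y z)
  then have "adj T y z" by (auto simp: adj_def)
  then show ?case using step by (meson rtranclp.rtrancl_into_rtrancl)
qed simp

fun walk :: "nat set set \<Rightarrow> nat list \<Rightarrow> bool" where
  "walk H [] = False"
| "walk H [x] = True"
| "walk H (x # y # xs) = ({x, y} \<in> H \<and> walk H (y # xs))"

lemma walk_nth: "walk H xs \<Longrightarrow> Suc i < length xs \<Longrightarrow> {xs ! i, xs ! Suc i} \<in> H"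
proof (induction H xs arbitrary: i rule: walk.induct)
  case (3 H x y xs)
  then show ?case by (cases i) auto
qed auto

lemma rtc_walk: "(adj H)\<^sup>*\<^sup>* a b \<Longrightarrow> \<exists>xs. walk H xs \<and> hd xs = a \<and> last xs = b"
proof (induction rule: converse_rtranclp_induct)
  case base then show ?case by (intro exI[of _ "[b]"]) simp
next
  case (step y z)
  then obtain xs where "walk H xs" "hd xs = z" "last xs = b" by blast
  then show ?case using step(1) by (intro exI[of _ "y # xs"]) (cases xs; auto simp: adj_def)
qed

lemma walk_append: "walk H (xs @ y # ys) \<longleftrightarrow> walk H (xs @ [y]) \<and> walk H (y # ys)"
proof (induction xs)
  case (Cons a xs)
  then show ?case by (cases xs) auto
qed simp

lemma walk_distinct: "walk H xs \<Longrightarrow> \<exists>ys. walk H ys \<and> distinct ys \<and> hd ys = hd xs \<and> last ys = last xs"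
proof (induction "length xs" arbitrary: xs rule: less_induct)
  case less
  show ?case
  proof (cases "distinct xs")
    case True then show ?thesis using less.prems by blast
  next
    case False
    then obtain as y bs cs where xs: "xs = as @ [y] @ bs @ [y] @ cs" using not_distinct_decomp by blast
    let ?zs = "as @ [y] @ cs"
    have w: "walk H (as @ [y])" "walk H ((y # bs) @ y # cs)" using less.prems xs walk_append[of H as y "bs @ y # cs"] by auto
    have "walk H (y # cs)" using w(2) walk_append by blast
    hence "walk H (as @ y # cs)" using w(1) walk_append[of H as y cs] by blast
    hence "walk H ?zs" by simp
    moreover have "length ?zs < length xs" using xs by simp
    moreover have "hd ?zs = hd xs" using xs by (cases as) auto
    moreover have "last ?zs = last xs" using xs by (cases cs) auto
    ultimately show ?thesis using less.hyps by metis
  qed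
qed

lemma acyclic_bridge:
  assumes "acyclic_graph T" "{a,b} \<in> T" "a \<noteq> b"
  shows "\<not> (adj (T - {{a,b}}))\<^sup>*\<^sup>* a b"
proof
  assume "(adj (T - {{a,b}}))\<^sup>*\<^sup>* a b"
  then obtain ws where w: "walk (T - {{a,b}}) ws" "distinct ws" "hd ws = a" "last ws = b"
    using rtc_walk walk_distinct by metis
  have ne: "ws \<noteq> []" using w(1) by auto
  have L3: "length ws \<ge> 3"
  proof (rule ccontr)
    assume "\<not> length ws \<ge> 3"
    moreover have "length ws > 0" using ne by simp
    ultimately consider "length ws = 1" | "length ws = 2" by linarith
    then show False
    proof cases
      case 1 then obtain z where "ws = [z]" by (cases ws) auto
      then show False using w assms(3) by simp
    next
      case 2 then obtain z1 z2 where "ws = [z1, z2]" by (cases ws; cases "tl ws") auto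
      then show False using w by simp
    qed
  qed
  have "\<forall>i < length ws. {ws ! i, ws ! ((i + 1) mod length ws)} \<in> T"
  proof (intro allI impI)
    fix i assume i: "i < length ws"
    show "{ws ! i, ws ! ((i + 1) mod length ws)} \<in> T"
    proof (cases "Suc i < length ws")
      case True then show ?thesis using walk_nth[OF w(1) True] by simp
    next
      case False
      then have si: "Suc i = length ws" using i by simp
      then have "i = length ws - 1" "(i+1) mod length ws = 0" by auto
      then have "ws ! i = b" "ws ! ((i+1) mod length ws) = a" using w ne by (auto simp: last_conv_nth hd_conv_nth)
      then show ?thesis using assms(2) by (simp add: insert_commute)
    qed
  qed
  then show False using assms(1) L3 w(2) unfolding acyclic_graph_def by blast
qed

lemma cyc_edge_inj:
  assumes "distinct cs" "length cs \<ge> 3" "i < length cs" "j < length cs"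
    "{cs ! i, cs ! ((i+1) mod length cs)} = {cs ! j, cs ! ((j+1) mod length cs)}"
  shows "i = j"
proof -
  let ?L = "length cs"
  have L0: "?L > 0" using assms(2) by linarith
  have m1: "(i+1) mod ?L < ?L" "(j+1) mod ?L < ?L" using mod_less_divisor[OF L0] by blast+
  from assms(5) consider "cs ! i = cs ! j" | "cs ! i = cs ! ((j+1) mod ?L)" "cs ! ((i+1) mod ?L) = cs ! j"
    by (auto simp: doubleton_eq_iff)
  then show ?thesis
  proof cases
    case 1 then show ?thesis using nth_eq_iff_index_eq[OF assms(1,3,4)] by blast
  next
    case 2
    have a1: "i = (j+1) mod ?L" using 2(1) nth_eq_iff_index_eq[OF assms(1) assms(3) m1(2)] by blast
    have a2: "(i+1) mod ?L = j" using 2(2) nth_eq_iff_index_eq[OF assms(1) m1(1) assms(4)] by blast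
    note a = a1 a2
    show ?thesis
    proof (cases "j + 1 < ?L")
      case True
      then have "i = j + 1" using a by simp
      show ?thesis
      proof (cases "j + 2 < ?L")
        case True
        then have "(i+1) mod ?L = j + 2" using \<open>i = j + 1\<close> by simp
        then show ?thesis using a by simp
      next
        case False
        then have "i + 1 = ?L" using \<open>i = j + 1\<close> True by simp
        then have "(i+1) mod ?L = 0" by simp
        then show ?thesis using a \<open>i + 1 = ?L\<close> \<open>i = j + 1\<close> assms(2) by simp
      qed
    next
      case False
      then have jL: "j + 1 = ?L" using assms(4) by simp
      then have "i = 0" using a by simp
      moreover have "1 mod ?L = 1" using assms(2) by simp
      ultimately have "j = 1" using a by simp
      then show ?thesis using jL assms(2) by simp
    qed
  qed
qed

lemma acyclic_add:
  assumes "acyclic_graph H" "\<not> (adj H)\<^sup>*\<^sup>* c d"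
  shows "acyclic_graph (insert {c,d} H)"
  unfolding acyclic_graph_def
proof (rule notI, elim exE conjE)
  fix cs assume L3: "3 \<le> length cs" and dist: "distinct cs"
    and all: "\<forall>i<length cs. {cs ! i, cs ! ((i + 1) mod length cs)} \<in> insert {c, d} H"
  define L where "L = length cs"
  have "\<exists>j<L. {cs ! j, cs ! ((j+1) mod L)} \<notin> H"
    using assms(1) L3 dist unfolding acyclic_graph_def L_def by blast
  then obtain j where j: "j < L" "{cs ! j, cs ! ((j+1) mod L)} \<notin> H" by blast
  hence ej: "{cs ! j, cs ! ((j+1) mod L)} = {c,d}" using all L_def by auto
  have other: "{cs ! i, cs ! ((i+1) mod L)} \<in> H" if "i < L" "i \<noteq> j" for i
  proof (rule ccontr)
    assume "{cs ! i, cs ! ((i+1) mod L)} \<notin> H"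
    then have "{cs ! i, cs ! ((i+1) mod L)} = {c,d}" using all that(1) L_def by auto
    then have "{cs ! i, cs ! ((i+1) mod length cs)} = {cs ! j, cs ! ((j+1) mod length cs)}"
      using ej L_def by simp
    then have "i = j" using cyc_edge_inj[OF dist L3] that(1) j(1) L_def by blast
    then show False using that(2) by contradiction
  qed
  have path: "t \<le> L - 1 \<Longrightarrow> (adj H)\<^sup>*\<^sup>* (cs ! ((j+1) mod L)) (cs ! ((j+1+t) mod L))" for t
  proof (induction t)
    case 0 show ?case by simp
  next
    case (Suc t)
    define i where "i = (j+1+t) mod L"
    have "L > 0" using L3 L_def by linarith
    then have iL: "i < L" using i_def by simp
    have "i \<noteq> j"
    proof
      assume "i = j"
      show False
      proof (cases "j+1+t < L")
        case True then show False using \<open>i = j\<close> i_def by simp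
      next
        case False
        then have le: "L \<le> j + 1 + t" by simp
        have lt: "j + 1 + t - L < L" using j(1) Suc.prems by linarith
        have "i = (j + 1 + t - L) mod L" using i_def le_mod_geq[OF le] by simp
        then have "i = j + 1 + t - L" using lt by simp
        then show False using \<open>i = j\<close> Suc.prems False j(1) L3 L_def by linarith
      qed
    qed
    then have "{cs ! i, cs ! ((i+1) mod L)} \<in> H" using other iL by blast
    moreover have "(i+1) mod L = (j+1+Suc t) mod L" using i_def by (simp add: mod_Suc_eq)
    ultimately have "adj H (cs ! ((j+1+t) mod L)) (cs ! ((j+1+Suc t) mod L))"
      using i_def by (simp add: adj_def)
    then show ?case using Suc by (meson Suc_leD rtranclp.rtrancl_into_rtrancl)
  qed
  have "j+1+(L-1) = j + L" using L3 L_def by simp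
  then have "(j+1+(L-1)) mod L = j" using j(1) by simp
  then have "(adj H)\<^sup>*\<^sup>* (cs ! ((j+1) mod L)) (cs ! j)" using path[of "L-1"] by simp
  moreover have "cs ! j = c \<and> cs ! ((j+1) mod L) = d \<or> cs ! j = d \<and> cs ! ((j+1) mod L) = c"
    using ej by (simp add: doubleton_eq_iff)
  ultimately show False using assms(2) rtc_sym by metis
qed

lemma acyclic_subset: "acyclic_graph T \<Longrightarrow> H \<subseteq> T \<Longrightarrow> acyclic_graph H"
  unfolding acyclic_graph_def by blast

lemma first_nbr:
  "(adj T)\<^sup>*\<^sup>* v u \<Longrightarrow> v = u \<or> (\<exists>x. {u,x} \<in> T \<and> (adj {e\<in>T. u \<notin> e})\<^sup>*\<^sup>* v x)"
proof (induction rule: converse_rtranclp_induct)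
  case base then show ?case by simp
next
  case (step y z)
  show ?case
  proof (cases "y = u")
    case True then show ?thesis by simp
  next
    case yu: False
    show ?thesis
    proof (cases "z = u")
      case True then have "{u,y} \<in> T" using step(1) by (simp add: adj_def insert_commute)
      then show ?thesis by blast
    next
      case False
      then obtain x where x: "{u,x} \<in> T" "(adj {e\<in>T. u \<notin> e})\<^sup>*\<^sup>* z x" using step.IH by blast
      have "adj {e\<in>T. u \<notin> e} y z" using step(1) yu False by (simp add: adj_def)
      then show ?thesis using x by (meson converse_rtranclp_into_rtranclp)
    qed
  qed
qed

lemma Kn_edge_mem: "{a,b} \<in> Kn_edges n \<Longrightarrow> a \<in> {1..n} \<and> b \<in> {1..n} \<and> a \<noteq> b"
  unfolding Kn_edges_def by (auto simp: doubleton_eq_iff)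

lemma exchange:
  assumes T: "spanning_tree n T" and u: "u \<in> {1..n}" and v: "v \<in> {1..n}"
    and uv: "u \<noteq> v" "{u,v} \<notin> T"
  shows "\<exists>x. {u,x} \<in> T \<and> spanning_tree n (insert {u,v} (T - {{u,x}}))"
proof -
  have sub: "T \<subseteq> Kn_edges n" and con: "connected_on {1..n} T" and ac: "acyclic_graph T"
    using T unfolding spanning_tree_def by auto
  have "(adj T)\<^sup>*\<^sup>* v u" using con u v unfolding connected_on_def by blast
  then obtain x where x: "{u,x} \<in> T" and vx: "(adj {e\<in>T. u \<notin> e})\<^sup>*\<^sup>* v x"
    using first_nbr uv(1) by blast
  have xu: "x \<noteq> u" using x sub Kn_edge_mem by blast
  define T' where "T' = insert {u,v} (T - {{u,x}})"
  have H0: "{e\<in>T. u \<notin> e} \<subseteq> T - {{u,x}}" by auto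
  have vx': "(adj (T - {{u,x}}))\<^sup>*\<^sup>* v x" using rtc_mono[OF vx H0] .
  have vxT': "(adj T')\<^sup>*\<^sup>* v x" using rtc_mono[OF vx'] T'_def by auto
  have ux: "(adj T')\<^sup>*\<^sup>* u x"
  proof -
    have "adj T' u v" unfolding T'_def adj_def by simp
    then show ?thesis using vxT' by (meson converse_rtranclp_into_rtranclp)
  qed
  have edge: "(adj T')\<^sup>*\<^sup>* a b" if "adj T a b" for a b
  proof (cases "{a,b} = {u,x}")
    case True
    then show ?thesis using ux rtc_sym[OF ux] by (auto simp: doubleton_eq_iff)
  next
    case False
    then have "adj T' a b" using that unfolding T'_def adj_def by auto
    then show ?thesis by simp
  qed
  have conn: "(adj T')\<^sup>*\<^sup>* a b" if "(adj T)\<^sup>*\<^sup>* a b" for a b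
    using that
  proof (induction rule: rtranclp_induct)
    case (step y z)
    then show ?case using edge[OF step(2)] by (meson rtranclp_trans)
  qed simp
  have "{u,v} \<in> Kn_edges n" using u v uv unfolding Kn_edges_def by blast
  then have s1: "T' \<subseteq> Kn_edges n" using sub T'_def by auto
  have s2: "connected_on {1..n} T'" using con conn unfolding connected_on_def by blast
  have "\<not> (adj (T - {{u,x}}))\<^sup>*\<^sup>* u v"
  proof
    assume "(adj (T - {{u,x}}))\<^sup>*\<^sup>* u v"
    then have "(adj (T - {{u,x}}))\<^sup>*\<^sup>* u x" using vx' by (meson rtranclp_trans)
    then show False using acyclic_bridge[OF ac x xu[symmetric]] by simp
  qed
  then have s3: "acyclic_graph T'" unfolding T'_def
    using acyclic_add acyclic_subset[OF ac] by blast
  show ?thesis using x s1 s2 s3 T'_def unfolding spanning_tree_def by blast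
qed

definition star :: "nat \<Rightarrow> nat set set" where
  "star n = {{1,j} | j. j \<in> {2..n}}"

lemma star_tree: "spanning_tree n (star n)"
proof -
  have s1: "star n \<subseteq> Kn_edges n" unfolding star_def Kn_edges_def by force
  have to1: "(adj (star n))\<^sup>*\<^sup>* a 1" if "a \<in> {1..n}" for a
  proof (cases "a = 1")
    case False
    then have "adj (star n) a 1" using that unfolding adj_def star_def by (auto simp: insert_commute)
    then show ?thesis by simp
  qed simp
  have s2: "connected_on {1..n} (star n)" unfolding connected_on_def
    using to1 rtc_sym by (meson rtranclp_trans)
  have s3: "acyclic_graph (star n)" unfolding acyclic_graph_def
  proof (rule notI, elim exE conjE)
    fix cs assume L3: "3 \<le> length cs" and dist: "distinct cs"
      and all: "\<forall>i<length cs. {cs ! i, cs ! ((i + 1) mod length cs)} \<in> star n"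
    define L where "L = length cs"
    have E: "cs ! i = 1 \<or> cs ! ((i+1) mod L) = 1" if "i < L" for i
      using all that L_def unfolding star_def by (auto simp: doubleton_eq_iff)
    have d: "a = b" if "a < L" "b < L" "cs ! a = cs ! b" for a b
      using dist that L_def nth_eq_iff_index_eq by blast
    define q where "q = 3 mod L"
    have L0: "L > 0" using L3 L_def by linarith
    have qL: "q < L" using q_def mod_less_divisor[OF L0] by blast
    have q12: "q \<noteq> 1 \<and> q \<noteq> 2"
    proof (cases "L = 3")
      case True then have "q = 0" using q_def by simp
      then show ?thesis by simp
    next
      case False then have "3 < L" using L3 L_def by simp
      then have "q = 3" using q_def by simp
      then show ?thesis by simp
    qed
    have ne: "cs \<noteq> []" using L0 L_def by auto
    have e0: "cs ! 0 = 1 \<or> cs ! 1 = 1" using E[of 0] L3 L_def ne by simp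
    have e1: "cs ! 1 = 1 \<or> cs ! 2 = 1" using E[of 1] L3 L_def by (simp add: numeral_2_eq_2)
    have e2: "cs ! 2 = 1 \<or> cs ! q = 1" using E[of 2] L3 L_def q_def by simp
    have "2 < L" using L3 L_def by simp
    have n02: "cs ! 0 = 1 \<Longrightarrow> cs ! 2 \<noteq> 1" using d[of 0 2] \<open>2 < L\<close> by auto
    have n12: "cs ! 1 = 1 \<Longrightarrow> cs ! 2 \<noteq> 1" using d[of 1 2] \<open>2 < L\<close> by auto
    have n1q: "cs ! 1 = 1 \<Longrightarrow> cs ! q \<noteq> 1" using d[of 1 q] \<open>2 < L\<close> qL q12 by auto
    show False using e0 e1 e2 n02 n12 n1q by blast
  qed
  show ?thesis using s1 s2 s3 unfolding spanning_tree_def by blast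
qed

lemma finite_Kn: "finite (Kn_edges n)"
proof -
  have "Kn_edges n \<subseteq> Pow {1..n}" unfolding Kn_edges_def by auto
  then show ?thesis by (rule finite_subset) simp
qed

lemma finite_ST: "finite (spanning_trees n)"
proof -
  have "spanning_trees n \<subseteq> Pow (Kn_edges n)" unfolding spanning_trees_def spanning_tree_def by auto
  then show ?thesis using finite_Kn by (meson finite_Pow_iff finite_subset)
qed

lemma ST_ne: "spanning_trees n \<noteq> {}"
  using star_tree unfolding spanning_trees_def by blast

definition AS :: "nat \<Rightarrow> nat set set \<Rightarrow> nat set \<Rightarrow> nat set set set" where
  "AS n F S = {T \<in> spanning_trees n. \<forall>s\<in>S. \<forall>w. {s,w} \<in> F \<longrightarrow> {s,w} \<notin> T}"

lemma step_count:
  assumes UV: "U \<inter> V = {}" and V: "V \<subseteq> {1..n}" and u: "u \<in> U" "u \<in> {1..n}"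
    and S: "S \<subseteq> U" "u \<notin> S" and deg: "bip_deg F V u \<ge> l"
  shows "card (AS n F (insert u S)) * (n + l) \<le> n * card (AS n F S)"
proof -
  define A' where "A' = AS n F (insert u S)"
  define A where "A = AS n F S"
  define N where "N = {v\<in>V. {u,v} \<in> F}"
  have A'A: "A' \<subseteq> A" unfolding A'_def A_def AS_def by auto
  have finA: "finite A" unfolding A_def AS_def using finite_ST by simp
  have "N \<subseteq> {1..n}" using V N_def by auto
  then have finN: "finite N" by (rule finite_subset) simp
  define xf where "xf T v = (SOME x. {u,x} \<in> T \<and> spanning_tree n (insert {u,v} (T - {{u,x}})))" for T v
  define \<Phi> where "\<Phi> p = (insert {u, snd p} (fst p - {{u, xf (fst p) (snd p)}}), xf (fst p) (snd p))" for p
  have key: "{u, xf T v} \<in> T \<and> spanning_tree n (insert {u,v} (T - {{u,xf T v}}))"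
    and nuv: "{u,v} \<notin> T"
    if "T \<in> A'" "v \<in> N" for T v
  proof -
    have T: "spanning_tree n T" using that(1) unfolding A'_def AS_def spanning_trees_def by auto
    have vV: "v \<in> V" "{u,v} \<in> F" using that(2) N_def by auto
    then show "{u,v} \<notin> T" using that(1) unfolding A'_def AS_def by auto
    have "u \<noteq> v" using vV UV u by auto
    then have "\<exists>x. {u,x} \<in> T \<and> spanning_tree n (insert {u,v} (T - {{u,x}}))"
      using exchange[OF T u(2)] vV V \<open>{u,v} \<notin> T\<close> by auto
    then show "{u, xf T v} \<in> T \<and> spanning_tree n (insert {u,v} (T - {{u,xf T v}}))"
      unfolding xf_def by (rule someI_ex)
  qed
  have maps: "\<Phi> p \<in> (A - A') \<times> {1..n}" if "p \<in> A' \<times> N" for p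
  proof -
    obtain T v where p: "p = (T, v)" by (cases p)
    have T: "T \<in> A'" and v: "v \<in> N" using that p by auto
    note k = key[OF T v]
    have vV: "v \<in> V" "{u,v} \<in> F" using v N_def by auto
    define T' where "T' = insert {u,v} (T - {{u,xf T v}})"
    have "T' \<in> spanning_trees n" using k T'_def spanning_trees_def by auto
    moreover have "\<forall>s\<in>S. \<forall>w. {s,w} \<in> F \<longrightarrow> {s,w} \<notin> T'"
    proof (intro ballI allI impI)
      fix s w assume s: "s \<in> S" and sw: "{s,w} \<in> F"
      have "{s,w} \<notin> T" using T s sw unfolding A'_def AS_def by auto
      moreover have "{s,w} \<noteq> {u,v}" using s S vV UV by (auto simp: doubleton_eq_iff)
      ultimately show "{s,w} \<notin> T'" unfolding T'_def by auto
    qed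
    ultimately have "T' \<in> A" unfolding A_def AS_def by auto
    moreover have "T' \<notin> A'" using vV unfolding A'_def AS_def T'_def by auto
    moreover have "xf T v \<in> {1..n}"
    proof -
      have "{u, xf T v} \<in> Kn_edges n" using k T unfolding A'_def AS_def spanning_trees_def spanning_tree_def by auto
      then show ?thesis using Kn_edge_mem by blast
    qed
    ultimately show ?thesis unfolding \<Phi>_def p T'_def by simp
  qed
  have inj: "inj_on \<Phi> (A' \<times> N)"
  proof (rule inj_onI)
    fix p q assume p: "p \<in> A' \<times> N" and q: "q \<in> A' \<times> N" and eq: "\<Phi> p = \<Phi> q"
    obtain T1 v1 where p1: "p = (T1, v1)" by (cases p)
    obtain T2 v2 where q1: "q = (T2, v2)" by (cases q)
    have p': "p = (T1, v1)" "T1 \<in> A'" "v1 \<in> N" using p p1 by auto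
    have q': "q = (T2, v2)" "T2 \<in> A'" "v2 \<in> N" using q q1 by auto
    have eq2: "(insert {u,v1} (T1 - {{u, xf T1 v1}}), xf T1 v1) = (insert {u,v2} (T2 - {{u, xf T2 v2}}), xf T2 v2)"
      using eq unfolding \<Phi>_def p'(1) q'(1) fst_conv snd_conv .
    have x: "xf T1 v1 = xf T2 v2" using arg_cong[OF eq2, of snd] by (simp only: snd_conv)
    have e: "insert {u,v1} (T1 - {{u, xf T1 v1}}) = insert {u,v2} (T2 - {{u, xf T2 v2}})"
      using arg_cong[OF eq2, of fst] by (simp only: fst_conv)
    have "{u,v2} \<notin> T1" using p'(2) q'(3) unfolding A'_def AS_def N_def by auto
    moreover have "{u,v2} \<in> insert {u,v1} (T1 - {{u, xf T1 v1}})" unfolding e by (rule insertI1)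
    ultimately have "{u,v2} = {u,v1}" by blast
    then have vv: "v1 = v2" by (auto simp: doubleton_eq_iff)
    have r: "T = insert {u, xf T v} (insert {u,v} (T - {{u, xf T v}}) - {{u,v}})" if "T \<in> A'" "v \<in> N" for T v
    proof -
      have "insert {u,v} (T - {{u, xf T v}}) - {{u,v}} = T - {{u, xf T v}}" using nuv[OF that] by blast
      then show ?thesis using key[OF that] insert_Diff by metis
    qed
    have "T1 = insert {u, xf T1 v1} (insert {u,v1} (T1 - {{u, xf T1 v1}}) - {{u,v1}})"
      by (rule r[OF p'(2,3)])
    also have "\<dots> = insert {u, xf T2 v2} (insert {u,v2} (T2 - {{u, xf T2 v2}}) - {{u,v2}})"
      apply (subst e) apply (subst x) apply (simp only: vv) done
    also have "\<dots> = T2" by (rule r[OF q'(2,3), symmetric])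
    finally have "T1 = T2" .
    then show "p = q" using p'(1) q'(1) vv by simp
  qed
  have "card (A' \<times> N) \<le> card ((A - A') \<times> {1..n})"
    using card_inj_on_le[OF inj] maps finA by blast
  moreover have "card (A' \<times> N) = card A' * card N" by (simp add: card_cartesian_product)
  moreover have "card ((A - A') \<times> {1..n}) = card (A - A') * n" by (simp add: card_cartesian_product)
  moreover have "card (A - A') = card A - card A'"
    using card_Diff_subset[OF finite_subset[OF A'A finA] A'A] .
  ultimately have c1: "card A' * card N \<le> (card A - card A') * n" by simp
  have "card N = bip_deg F V u" unfolding N_def bip_deg_def by simp
  then have "card A' * l \<le> card A' * card N" using deg by simp
  with c1 have "card A' * l \<le> (card A - card A') * n" by linarith
  moreover have "card A' \<le> card A" using A'A finA card_mono by blast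
  moreover have "(card A - card A') * n = card A * n - card A' * n" by (simp add: diff_mult_distrib)
  moreover have "card A' * n \<le> card A * n" using \<open>card A' \<le> card A\<close> by simp
  ultimately have "card A' * l + card A' * n \<le> card A * n" by linarith
  then show ?thesis unfolding A'_def[symmetric] A_def[symmetric] by (simp add: algebra_simps)
qed

lemma iter_count:
  assumes UV: "U \<inter> V = {}" and V: "V \<subseteq> {1..n}" and Un: "U \<subseteq> {1..n}"
    and deg: "\<forall>u\<in>U. bip_deg F V u \<ge> l" and fin: "finite S" and S: "S \<subseteq> U"
  shows "card (AS n F S) * (n + l) ^ card S \<le> n ^ card S * card (spanning_trees n)"
  using fin S
proof (induction S rule: finite_induct)
  case empty
  then show ?case unfolding AS_def by simp
next
  case (insert x S)
  have x: "x \<in> U" "x \<in> {1..n}" using insert Un by auto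
  have st: "card (AS n F (insert x S)) * (n + l) \<le> n * card (AS n F S)"
    using step_count[OF UV V x _ insert(2)] insert(4) deg x by auto
  have "card (AS n F (insert x S)) * (n + l) ^ card (insert x S)
        = (card (AS n F (insert x S)) * (n + l)) * (n + l) ^ card S" using insert by simp
  also have "\<dots> \<le> (n * card (AS n F S)) * (n + l) ^ card S" using st by (rule mult_le_mono1)
  also have "\<dots> = n * (card (AS n F S) * (n + l) ^ card S)" by simp
  also have "\<dots> \<le> n * (n ^ card S * card (spanning_trees n))" using insert by simp
  also have "\<dots> = n ^ card (insert x S) * card (spanning_trees n)" using insert by simp
  finally show ?case .
qed

theorem lemma2p10:
  shows "\<exists>\<epsilon>0 > (0::real). \<forall>\<epsilon>. 0 < \<epsilon> \<and> \<epsilon> < \<epsilon>0 \<longrightarrow>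
    (\<exists>c > (0::real). \<forall>(n::nat) (m::nat) (l::nat) (k::nat) (U::nat set) (V::nat set) (F::nat set set).
       real m \<ge> \<epsilon> * real n \<longrightarrow> \<epsilon> * real m \<le> real l \<longrightarrow> l \<le> m \<longrightarrow> k + m \<le> n \<longrightarrow>
       U \<subseteq> {1..n} \<longrightarrow> V \<subseteq> {1..n} \<longrightarrow> U \<inter> V = {} \<longrightarrow>
       F \<subseteq> {{u, v} | u v. u \<in> U \<and> v \<in> V} \<longrightarrow>
       card U = k \<longrightarrow> card V = m \<longrightarrow>
       (\<forall>u\<in>U. bip_deg F V u \<ge> l) \<longrightarrow>
       measure_pmf.prob (UST n) {T. F \<inter> T = {}} \<le> exp (- c * real k))"
proof (rule exI[of _ 1], intro conjI allI impI)
  fix \<epsilon> :: real assume e: "0 < \<epsilon> \<and> \<epsilon> < 1"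
  define c where "c = ln (1 + \<epsilon>\<^sup>2)"
  have "1 < 1 + \<epsilon>\<^sup>2" using e by simp
  then have c0: "c > 0" unfolding c_def by (rule ln_gt_zero)
  show "\<exists>c > (0::real). \<forall>(n::nat) (m::nat) (l::nat) (k::nat) (U::nat set) (V::nat set) (F::nat set set).
       real m \<ge> \<epsilon> * real n \<longrightarrow> \<epsilon> * real m \<le> real l \<longrightarrow> l \<le> m \<longrightarrow> k + m \<le> n \<longrightarrow>
       U \<subseteq> {1..n} \<longrightarrow> V \<subseteq> {1..n} \<longrightarrow> U \<inter> V = {} \<longrightarrow>
       F \<subseteq> {{u, v} | u v. u \<in> U \<and> v \<in> V} \<longrightarrow>
       card U = k \<longrightarrow> card V = m \<longrightarrow>
       (\<forall>u\<in>U. bip_deg F V u \<ge> l) \<longrightarrow>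
       measure_pmf.prob (UST n) {T. F \<inter> T = {}} \<le> exp (- c * real k)"
  proof (intro exI[of _ c] conjI c0 allI impI)
    fix n m l k :: nat and U V :: "nat set" and F :: "nat set set"
    assume hm: "real m \<ge> \<epsilon> * real n" and hl: "\<epsilon> * real m \<le> real l" and "l \<le> m"
      and hk: "k + m \<le> n" and Un: "U \<subseteq> {1..n}" and Vn: "V \<subseteq> {1..n}" and UV: "U \<inter> V = {}"
      and Fs: "F \<subseteq> {{u, v} | u v. u \<in> U \<and> v \<in> V}" and cU: "card U = k" and "card V = m"
      and deg: "\<forall>u\<in>U. bip_deg F V u \<ge> l"
    show "measure_pmf.prob (UST n) {T. F \<inter> T = {}} \<le> exp (- c * real k)"
    proof (cases "n = 0")
      case True
      then have "k = 0" using hk by simp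
      then show ?thesis by (simp add: measure_pmf.prob_le_1)
    next
      case False
      then have n0: "n > 0" by simp
      define ST where "ST = spanning_trees n"
      have finU: "finite U" using Un finite_subset by blast
      have eqA: "AS n F U = ST \<inter> {T. F \<inter> T = {}}"
      proof (rule set_eqI, rule iffI)
        fix T assume "T \<in> AS n F U"
        then have T: "T \<in> ST" and a: "\<forall>s\<in>U. \<forall>w. {s,w} \<in> F \<longrightarrow> {s,w} \<notin> T"
          unfolding AS_def ST_def by auto
        have "F \<inter> T = {}"
        proof (rule ccontr)
          assume "F \<inter> T \<noteq> {}"
          then obtain e where "e \<in> F" "e \<in> T" by blast
          then obtain a b where "e = {a,b}" "a \<in> U" using Fs by blast
          then show False using a \<open>e \<in> F\<close> \<open>e \<in> T\<close> by blast
        qed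
        then show "T \<in> ST \<inter> {T. F \<inter> T = {}}" using T by simp
      next
        fix T assume "T \<in> ST \<inter> {T. F \<inter> T = {}}"
        then show "T \<in> AS n F U" unfolding AS_def ST_def by auto
      qed
      have cnt: "card (AS n F U) * (n + l) ^ k \<le> n ^ k * card ST"
        using iter_count[OF UV Vn Un deg finU subset_refl] cU ST_def by simp
      have finST: "finite ST" and neST: "ST \<noteq> {}" using finite_ST ST_ne ST_def by auto
      have cST: "card ST > 0" using finST neST by (simp add: card_gt_0_iff)
      have prob: "measure_pmf.prob (UST n) {T. F \<inter> T = {}} = card (AS n F U) / card ST"
        unfolding UST_def ST_def[symmetric] eqA
        using measure_pmf_of_set[OF neST finST] by (simp add: Int_commute)
      have nl: "real n + real l > 0" using n0 by simp
      have "real (card (AS n F U)) * (real n + real l) ^ k \<le> real n ^ k * real (card ST)"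
        using cnt by (metis of_nat_add of_nat_le_iff of_nat_mult of_nat_power)
      then have r1: "card (AS n F U) / card ST \<le> (real n / (real n + real l)) ^ k"
        using cST nl by (simp add: divide_simps power_divide mult.commute)
      have "\<epsilon> * (\<epsilon> * real n) \<le> \<epsilon> * real m" using hm e by (simp add: mult_left_mono)
      then have el: "\<epsilon>\<^sup>2 * real n \<le> real l" using hl by (simp add: power2_eq_square)
      have pos: "0 < 1 + \<epsilon>\<^sup>2" by (simp add: add_pos_nonneg)
      have "real n * (1 + \<epsilon>\<^sup>2) \<le> real n + real l" using el by (simp add: algebra_simps)
      then have q: "real n / (real n + real l) \<le> 1 / (1 + \<epsilon>\<^sup>2)"
        using nl pos by (simp add: divide_simps)
      have "(real n / (real n + real l)) ^ k \<le> (1 / (1 + \<epsilon>\<^sup>2)) ^ k"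
        using q nl by (simp add: power_mono)
      also have "\<dots> = exp (- c * real k)"
      proof -
        have "exp (- c * real k) = exp (real k * (- c))" by (simp add: mult.commute)
        also have "\<dots> = exp (- c) ^ k" by (rule exp_of_nat_mult)
        also have "exp (- c) = 1 / (1 + \<epsilon>\<^sup>2)" unfolding c_def
          by (simp add: exp_minus divide_inverse add_pos_nonneg)
        finally show ?thesis by simp
      qed
      finally show ?thesis using prob r1 by simp
    qed
  qed
qed simp

end
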